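(* Let $K\subset\mathbb{R}^m$ be a pointed, closed, convex cone with nonempty interior which is finitely generated, let $C\subset\mathbb{R}^m$ be a finite set with $0\notin C$ and $K^*=\operatorname{cone}(\operatorname{conv}(C))$, and let $F:\mathbb{R}^n\to\mathbb{R}^m$ be continuously differentiable. Define $h(x,d)=\max\{\langle JF(x)d,w\rangle : w\in C\}$ and $v(x)=\arg\min_{d}\{h(x,d)+\tfrac12\|d\|^2\}$. Fix $0<\rho<1$, $0<\delta<1$, $\mu>2$, and $e\in\operatorname{int}(K)$ with $\langle w,e\rangle\le1$ for all $w\in C$. Let $x^0\in\mathbb{R}^n$ and assume: (A1) there is an open set $\Lambda$ containing $\mathcal{L}=\{x: F(x)\preceq_K F(x^0)\}$ such that $\|JF(x)-JF(y)\|\le L\|x-y\|$ for all $x,y\in\Lambda$; (A2) every sequence $\{D_k\}\subset F(\mathcal{L})$ with $D_{k+1}\preceq_K D_k$ for all $k$ admits $D\in\mathbb{R}^m$ with $D\preceq_K D_k$ for all $k$. Let $\{x^k\}$ be an infinite sequence generated as follows: $d^0=v(x^0)$; for $k\ge1$, $d^k=v(x^k)+\beta_k d^{k-1}$ with $$\beta_k=\frac{-h(x^k,v(x^k))\big(|h(x^{k-1},v(x^k))|+h(x^{k-1},v(x^k))\big)}{\max\big\{\mu|h(x^k,d^{k-1})h(x^{k-1},v(x^k))|,\ -\mu h(x^{k-1},v(x^{k-1}))|h(x^{k-1},v(x^k))|\big\}};$$ $x^{k+1}=x^k+\alpha_kd^k$, where, with $\tau_k=-h(x^k,d^k)/\|d^k\|^2$,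 $\alpha_k$ is the largest element of $\{\tau_k,\delta\tau_k,\delta^2\tau_k,\dots\}$ satisfying the Armijo condition $$F(x^k+\alpha_kd^k)\preceq_K F(x^k)+\rho\alpha_k h(x^k,d^k)e.$$ Then $\liminf_{k\to\infty}\|v(x^k)\|=0$.
   Context: $u\preceq_K v$ means $v-u\in K$. $K^*$ is the positive polar cone of $K$ and $JF$ the Jacobian of $F$. The sequence is assumed infinite, i.e. $v(x^k)\neq0$ for all $k$; $v(x)=0$ iff $x$ is a $K$-Pareto critical point, i.e. $\operatorname{Im}(JF(x))\cap(-\operatorname{int}K)=\emptyset$. *)

theory Defs
  imports "HOL-Analysis.Analysis"
begin

definition cone_le :: "'b::real_vector set \<Rightarrow> 'b \<Rightarrow> 'b \<Rightarrow> bool" where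
  "cone_le K u v \<longleftrightarrow> v - u \<in> K"

definition pos_polar :: "'b::real_inner set \<Rightarrow> 'b set" where
  "pos_polar K = {w. \<forall>y\<in>K. inner w y \<ge> 0}"

definition pointed :: "'b::real_vector set \<Rightarrow> bool" where
  "pointed K \<longleftrightarrow> (\<forall>y. y \<in> K \<and> - y \<in> K \<longrightarrow> y = 0)"

definition finitely_generated_cone :: "'b::real_vector set \<Rightarrow> bool" where
  "finitely_generated_cone K \<longleftrightarrow> (\<exists>G. finite G \<and> K = cone hull (convex hull G))"

definition hfun :: "('a::euclidean_space \<Rightarrow> 'a \<Rightarrow>\<^sub>L 'b::euclidean_space) \<Rightarrow> 'b set \<Rightarrow> 'a \<Rightarrow> 'a \<Rightarrow> real" where
  "hfun J C x d = Max ((\<lambda>w. inner (blinfun_apply (J x) d) w) ` C)"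

text \<open>v(x) = argmin_d { h(x,d) + 1/2 ||d||^2 } (the minimiser is unique by strong convexity).\<close>
definition vfun :: "('a::euclidean_space \<Rightarrow> 'a \<Rightarrow>\<^sub>L 'b::euclidean_space) \<Rightarrow> 'b set \<Rightarrow> 'a \<Rightarrow> 'a" where
  "vfun J C x = (THE d. \<forall>d'. hfun J C x d + (norm d)\<^sup>2 / 2 \<le> hfun J C x d' + (norm d')\<^sup>2 / 2)"

end

theory Submission
  imports Defs
begin


lemma K_char:
  fixes K C :: "'b::euclidean_space set"
  assumes K_cone: "convex_cone K" and K_closed: "closed K"
    and C_gen: "pos_polar K = cone hull (convex hull C)"
  shows "y \<in> K \<longleftrightarrow> (\<forall>c\<in>C. 0 \<le> inner c y)"
proof
  assume y: "y \<in> K"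
  show "\<forall>c\<in>C. 0 \<le> inner c y"
  proof
    fix c assume "c \<in> C"
    then have "c \<in> cone hull (convex hull C)"
      by (meson hull_inc)
    then have "c \<in> pos_polar K" using C_gen by simp
    then show "0 \<le> inner c y" using y unfolding pos_polar_def by auto
  qed
next
  assume H: "\<forall>c\<in>C. 0 \<le> inner c y"
  show "y \<in> K"
  proof (rule ccontr)
    assume "y \<notin> K"
    have cvx: "convex K" using K_cone unfolding convex_cone_def by auto
    obtain a b where ab: "inner a y < b" "\<forall>x\<in>K. inner a x > b"
      using separating_hyperplane_closed_point[OF cvx K_closed \<open>y \<notin> K\<close>] by blast
    have "0 \<in> K" using K_cone unfolding convex_cone_def conic_def
      by (metis all_not_in_conv scale_zero_left order_refl)
    then have b0: "b < 0" using ab by auto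
    have "a \<in> pos_polar K"
      unfolding pos_polar_def
    proof (safe)
      fix x assume x: "x \<in> K"
      show "0 \<le> inner a x"
      proof (rule ccontr)
        assume "\<not> 0 \<le> inner a x"
        then have neg: "inner a x < 0" by simp
        define t where "t = b / inner a x"
        have t0: "t \<ge> 0" unfolding t_def using b0 neg by (simp add: divide_nonpos_neg)
        have "t *\<^sub>R x \<in> K" using K_cone x t0 unfolding convex_cone_def conic_def by blast
        then have "inner a (t *\<^sub>R x) > b" using ab by auto
        moreover have "inner a (t *\<^sub>R x) = b" unfolding t_def using neg by simp
        ultimately show False by simp
      qed
    qed
    then have "a \<in> cone hull (convex hull C)" using C_gen by simp
    then obtain s z where sz: "a = s *\<^sub>R z" "s \<ge> 0" "z \<in> convex hull C"
      unfolding cone_hull_expl by blast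
    have "convex hull C \<subseteq> {w. inner w y \<ge> 0}"
      by (rule hull_minimal) (use H convex_halfspace_ge[of 0 y] in \<open>auto simp: inner_commute\<close>)
    then have "inner z y \<ge> 0" using sz by auto
    then have "inner a y \<ge> 0" using sz by simp
    then show False using ab b0 by simp
  qed
qed



context
  fixes J :: "'a::euclidean_space \<Rightarrow> 'a \<Rightarrow>\<^sub>L 'b::euclidean_space" and C :: "'b set" and x :: 'a
  assumes Cf: "finite C" and Cne: "C \<noteq> {}"
begin

lemma hfun_ge: "c \<in> C \<Longrightarrow> inner (blinfun_apply (J x) d) c \<le> hfun J C x d"
  unfolding hfun_def using Cf by (intro Max_ge) auto

lemma hfun_ex: "\<exists>c\<in>C. hfun J C x d = inner (blinfun_apply (J x) d) c"
proof -
  have "hfun J C x d \<in> (\<lambda>w. inner (blinfun_apply (J x) d) w) ` C"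
    unfolding hfun_def using Cf Cne by (intro Max_in) auto
  then show ?thesis by auto
qed

lemma hfun_add: "hfun J C x (a + b) \<le> hfun J C x a + hfun J C x b"
proof -
  obtain c where c: "c \<in> C" "hfun J C x (a + b) = inner (blinfun_apply (J x) (a + b)) c"
    using hfun_ex by blast
  have "inner (blinfun_apply (J x) (a + b)) c = inner (blinfun_apply (J x) a) c + inner (blinfun_apply (J x) b) c"
    by (simp add: blinfun.add_right inner_add_left)
  also have "\<dots> \<le> hfun J C x a + hfun J C x b" using hfun_ge[OF c(1)] by (intro add_mono) auto
  finally show ?thesis using c by simp
qed

lemma hfun_scale: "t \<ge> 0 \<Longrightarrow> hfun J C x (t *\<^sub>R a) = t * hfun J C x a"
proof -
  assume t: "t \<ge> 0"
  obtain c where c: "c \<in> C" "hfun J C x (t *\<^sub>R a) = inner (blinfun_apply (J x) (t *\<^sub>R a)) c"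
    using hfun_ex by blast
  obtain c' where c': "c' \<in> C" "hfun J C x a = inner (blinfun_apply (J x) a) c'"
    using hfun_ex by blast
  have "hfun J C x (t *\<^sub>R a) = t * inner (blinfun_apply (J x) a) c"
    using c by (simp add: blinfun.scaleR_right)
  also have "\<dots> \<le> t * hfun J C x a" using hfun_ge[OF c(1)] t by (simp add: mult_left_mono)
  finally have 1: "hfun J C x (t *\<^sub>R a) \<le> t * hfun J C x a" .
  have "t * hfun J C x a = inner (blinfun_apply (J x) (t *\<^sub>R a)) c'"
    using c' by (simp add: blinfun.scaleR_right)
  also have "\<dots> \<le> hfun J C x (t *\<^sub>R a)" by (rule hfun_ge[OF c'(1)])
  finally show ?thesis using 1 by simp
qed

lemma hfun_zero: "hfun J C x 0 = 0"
  using hfun_scale[of 0 0] by simp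

lemma hfun_bound: "\<bar>hfun J C x a\<bar> \<le> norm (J x) * (\<Sum>c\<in>C. norm c) * norm a"
proof -
  have nc: "norm c \<le> (\<Sum>c\<in>C. norm c)" if "c \<in> C" for c
    using Cf that by (intro member_le_sum) auto
  obtain c where c: "c \<in> C" "hfun J C x a = inner (blinfun_apply (J x) a) c"
    using hfun_ex by blast
  have "\<bar>inner (blinfun_apply (J x) a) c\<bar> \<le> norm (blinfun_apply (J x) a) * norm c"
    by (rule Cauchy_Schwarz_ineq2)
  also have "\<dots> \<le> (norm (J x) * norm a) * (\<Sum>c\<in>C. norm c)"
    by (intro mult_mono norm_blinfun nc[OF c(1)]) auto
  finally show ?thesis using c by (simp add: algebra_simps)
qed

lemma hfun_lip: "\<bar>hfun J C x a - hfun J C x b\<bar> \<le> norm (J x) * (\<Sum>c\<in>C. norm c) * norm (a - b)"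
proof -
  have 1: "hfun J C x a \<le> hfun J C x b + hfun J C x (a - b)"
    using hfun_add[of b "a - b"] by simp
  have 2: "hfun J C x b \<le> hfun J C x a + hfun J C x (b - a)"
    using hfun_add[of a "b - a"] by simp
  have 3: "norm (b - a) = norm (a - b)" by (simp add: norm_minus_commute)
  show ?thesis using 1 2 hfun_bound[of "a - b"] hfun_bound[of "b - a"] 3 by auto
qed

lemma hfun_cont: "continuous_on UNIV (hfun J C x)"
proof -
  have "lipschitz_on (norm (J x) * (\<Sum>c\<in>C. norm c)) UNIV (hfun J C x)"
    unfolding lipschitz_on_def
    using hfun_lip by (auto simp: dist_real_def dist_norm intro!: mult_nonneg_nonneg sum_nonneg)
  then show ?thesis by (rule lipschitz_on_continuous_on)
qed

definition "phi d = hfun J C x d + (norm d)\<^sup>2 / 2"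

lemma phi_exists: "\<exists>d. \<forall>d'. phi d \<le> phi d'"
proof -
  define B where "B = norm (J x) * (\<Sum>c\<in>C. norm c)"
  have B0: "B \<ge> 0" unfolding B_def by (auto intro!: mult_nonneg_nonneg sum_nonneg)
  have cont: "continuous_on (cball 0 (2*B+1)) phi"
    unfolding phi_def
    by (intro continuous_intros continuous_on_subset[OF hfun_cont]) auto
  obtain d where d: "d \<in> cball 0 (2*B+1)" "\<forall>y\<in>cball 0 (2*B+1). phi d \<le> phi y"
    using continuous_attains_inf[OF compact_cball _ cont] B0 by fastforce
  have "phi d \<le> phi d'" for d'
  proof (cases "d' \<in> cball 0 (2*B+1)")
    case True then show ?thesis using d by auto
  next
    case False
    then have n: "norm d' > 2*B+1" by simp
    have "phi d \<le> phi 0" using d B0 by auto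
    also have "phi 0 = 0" unfolding phi_def by (simp add: hfun_zero)
    also have "0 \<le> phi d'"
    proof -
      have "hfun J C x d' \<ge> - B * norm d'" using hfun_bound[of d'] unfolding B_def by auto
      moreover have "(norm d')\<^sup>2 / 2 \<ge> B * norm d'"
      proof -
        have "B * 2 \<le> norm d'" using n by simp
        then have "(B * 2) * norm d' \<le> norm d' * norm d'" by (intro mult_right_mono) auto
        then show ?thesis by (simp add: power2_eq_square)
      qed
      ultimately show ?thesis unfolding phi_def by linarith
    qed
    finally show ?thesis .
  qed
  then show ?thesis by blast
qed

lemma phi_unique:
  assumes a: "\<forall>d'. phi a \<le> phi d'" and b: "\<forall>d'. phi b \<le> phi d'"
  shows "a = b"
proof (rule ccontr)
  assume ne: "a \<noteq> b"
  define m where "m = (1/2) *\<^sub>R a + (1/2) *\<^sub>R b"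
  have h: "hfun J C x m \<le> (1/2) * hfun J C x a + (1/2) * hfun J C x b"
    unfolding m_def using hfun_add[of "(1/2) *\<^sub>R a" "(1/2) *\<^sub>R b"] hfun_scale[of "1/2" a] hfun_scale[of "1/2" b] by simp
  have nm: "(norm m)\<^sup>2 = (norm a)\<^sup>2 / 2 + (norm b)\<^sup>2 / 2 - (norm (a - b))\<^sup>2 / 4"
    unfolding m_def power2_norm_eq_inner
    by (simp add: inner_simps inner_commute[of b a] field_simps)
  have pos: "(norm (a - b))\<^sup>2 > 0" using ne by simp
  have "2 * phi m < phi a + phi b"
    unfolding phi_def using h nm by (simp add: field_simps) (use pos in linarith)
  moreover have "phi a \<le> phi m" "phi b \<le> phi m" using a b by auto
  ultimately show False by linarith
qed

lemma vfun_min: "\<forall>d'. phi (vfun J C x) \<le> phi d'"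
proof -
  have "\<exists>!d. \<forall>d'. phi d \<le> phi d'" using phi_exists phi_unique by blast
  then have "\<forall>d'. phi (THE d. \<forall>d'. phi d \<le> phi d') \<le> phi d'" by (rule theI')
  then show ?thesis unfolding vfun_def phi_def by simp
qed

lemma hfun_vfun: "hfun J C x (vfun J C x) = - (norm (vfun J C x))\<^sup>2"
proof -
  define v where "v = vfun J C x"
  define N where "N = (norm v)\<^sup>2"
  define hv where "hv = hfun J C x v"
  have mn: "hv + N / 2 \<le> t * hv + t\<^sup>2 * N / 2" if "t \<ge> 0" for t
  proof -
    have "phi v \<le> phi (t *\<^sub>R v)" using vfun_min unfolding v_def by auto
    then show ?thesis unfolding phi_def hv_def N_def using that
      by (simp add: hfun_scale power_mult_distrib)
  qed
  have N0: "N \<ge> 0" unfolding N_def by simp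
  from mn[of 0] have h0: "hv \<le> - N / 2" by simp
  show ?thesis
  proof (cases "N = 0")
    case True
    then have "v = 0" unfolding N_def by simp
    then show ?thesis using hfun_zero unfolding v_def by simp
  next
    case False
    then have Np: "N > 0" using N0 by simp
    have t0: "- hv / N \<ge> 0" using h0 Np N0 by (intro divide_nonneg_pos) auto
    from mn[OF t0] have "hv + N / 2 \<le> (- hv / N) * hv + (- hv / N)\<^sup>2 * N / 2" .
    then have "hv + N / 2 \<le> - (hv * hv) / (2 * N)" using Np
      by (simp add: power2_eq_square)
    then have "2 * N * (hv + N / 2) \<le> 2 * N * (- (hv * hv) / (2 * N))" using Np
      by (intro mult_left_mono) auto
    then have "(hv + N)\<^sup>2 \<le> 0" using Np by (simp add: power2_eq_square algebra_simps)
    then have "hv = - N" by simp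
    then show ?thesis unfolding hv_def N_def v_def .
  qed
qed

end



lemma lemA:
  fixes F :: "'a::euclidean_space \<Rightarrow> 'b::euclidean_space" and J :: "'a \<Rightarrow> 'a \<Rightarrow>\<^sub>L 'b"
  assumes F_deriv: "\<And>y. (F has_derivative blinfun_apply (J y)) (at y)"
    and lip: "\<forall>y\<in>\<Lambda>. \<forall>z\<in>\<Lambda>. norm (J y - J z) \<le> L * norm (y - z)" and L0: "L \<ge> 0"
    and s: "s > 0" and seg: "\<forall>r. 0 \<le> r \<and> r < s \<longrightarrow> x + r *\<^sub>R d \<in> \<Lambda>"
  shows "inner c (F (x + s *\<^sub>R d)) - inner c (F x)
          \<le> s * inner (blinfun_apply (J x) d) c + norm c * L * s\<^sup>2 * (norm d)\<^sup>2"
proof -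
  define f where "f r = inner c (F (x + r *\<^sub>R d))" for r
  define f' where "f' r = inner c (blinfun_apply (J (x + r *\<^sub>R d)) d)" for r
  have der: "(f has_real_derivative f' r) (at r)" for r
  proof -
    have 1: "((\<lambda>r. x + r *\<^sub>R d) has_derivative (\<lambda>h. h *\<^sub>R d)) (at r)"
      by (auto intro!: derivative_eq_intros)
    have 2: "((\<lambda>r. F (x + r *\<^sub>R d)) has_derivative (\<lambda>h. blinfun_apply (J (x + r *\<^sub>R d)) (h *\<^sub>R d))) (at r)"
      using has_derivative_compose[OF 1 F_deriv] .
    have 3: "(f has_derivative (\<lambda>h. inner c (blinfun_apply (J (x + r *\<^sub>R d)) (h *\<^sub>R d)))) (at r)"
      unfolding f_def by (rule has_derivative_inner_right[OF 2])
    show ?thesis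
      by (rule has_derivative_imp_has_field_derivative[OF 3])
         (simp add: f'_def blinfun.scaleR_right)
  qed
  obtain z where z: "0 < z" "z < s" "f s - f 0 = (s - 0) * f' z"
    using MVT2[OF s, of f f'] der by blast
  have xz: "x + z *\<^sub>R d \<in> \<Lambda>" using seg z by auto
  have x0: "x \<in> \<Lambda>" using seg[rule_format, of 0] s by simp
  have "f' z = inner c (blinfun_apply (J x) d) + inner c (blinfun_apply (J (x + z *\<^sub>R d) - J x) d)"
    unfolding f'_def by (simp add: blinfun.diff_left inner_diff_right)
  also have "inner c (blinfun_apply (J (x + z *\<^sub>R d) - J x) d) \<le> norm c * norm (blinfun_apply (J (x + z *\<^sub>R d) - J x) d)"
    by (rule norm_cauchy_schwarz)
  also have "\<dots> \<le> norm c * (norm (J (x + z *\<^sub>R d) - J x) * norm d)"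
    by (intro mult_left_mono norm_blinfun) auto
  also have "\<dots> \<le> norm c * ((L * norm (z *\<^sub>R d)) * norm d)"
  proof -
    have "norm (J (x + z *\<^sub>R d) - J x) \<le> L * norm ((x + z *\<^sub>R d) - x)"
      using lip xz x0 by blast
    then show ?thesis by (intro mult_left_mono mult_right_mono) auto
  qed
  also have "\<dots> \<le> norm c * ((L * (s * norm d)) * norm d)"
    using z L0 by (intro mult_left_mono mult_right_mono) (auto intro!: mult_right_mono)
  finally have "f' z \<le> inner c (blinfun_apply (J x) d) + norm c * L * s * (norm d)\<^sup>2"
    by (simp add: power2_eq_square algebra_simps)
  then have "s * f' z \<le> s * (inner c (blinfun_apply (J x) d) + norm c * L * s * (norm d)\<^sup>2)"
    using s by (intro mult_left_mono) auto
  then show ?thesis using z unfolding f_def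
    by (simp add: power2_eq_square algebra_simps inner_commute)
qed



theorem mainTheorem4:
  fixes F :: "'a::euclidean_space \<Rightarrow> 'b::euclidean_space"
    and J :: "'a \<Rightarrow> 'a \<Rightarrow>\<^sub>L 'b"
    and K C :: "'b set"
    and \<rho> \<delta> \<mu> :: real and e :: 'b
    and x d :: "nat \<Rightarrow> 'a" and \<alpha> \<beta> \<tau> :: "nat \<Rightarrow> real"
  assumes K_cone: "convex_cone K" and K_closed: "closed K" and K_pointed: "pointed K"
    and K_int: "interior K \<noteq> {}" and K_fg: "finitely_generated_cone K"
    and C_fin: "finite C" and C_0: "0 \<notin> C"
    and C_gen: "pos_polar K = cone hull (convex hull C)"
    and F_deriv: "\<And>y. (F has_derivative blinfun_apply (J y)) (at y)"
    and J_cont: "continuous_on UNIV J"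
    and rho: "0 < \<rho>" "\<rho> < 1" and delta: "0 < \<delta>" "\<delta> < 1" and mu: "\<mu> > 2"
    and e_int: "e \<in> interior K" and e_C: "\<forall>w\<in>C. inner w e \<le> 1"
    and A1: "\<exists>\<Lambda> L. open \<Lambda> \<and> {y. cone_le K (F y) (F (x 0))} \<subseteq> \<Lambda> \<and>
              (\<forall>y\<in>\<Lambda>. \<forall>z\<in>\<Lambda>. norm (J y - J z) \<le> L * norm (y - z))"
    and A2: "\<forall>D :: nat \<Rightarrow> 'b. (\<forall>k. D k \<in> F ` {y. cone_le K (F y) (F (x 0))}) \<and>
              (\<forall>k. cone_le K (D (Suc k)) (D k)) \<longrightarrow> (\<exists>D0. \<forall>k. cone_le K D0 (D k))"
    and d0: "d 0 = vfun J C (x 0)"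
    and dk: "\<forall>k\<ge>1. d k = vfun J C (x k) + \<beta> k *\<^sub>R d (k - 1)"
    and betak: "\<forall>k\<ge>1. \<beta> k =
        (- hfun J C (x k) (vfun J C (x k)) *
           (\<bar>hfun J C (x (k - 1)) (vfun J C (x k))\<bar> + hfun J C (x (k - 1)) (vfun J C (x k))))
        / max (\<mu> * \<bar>hfun J C (x k) (d (k - 1)) * hfun J C (x (k - 1)) (vfun J C (x k))\<bar>)
              (- \<mu> * hfun J C (x (k - 1)) (vfun J C (x (k - 1))) *
                 \<bar>hfun J C (x (k - 1)) (vfun J C (x k))\<bar>)"
    and tauk: "\<forall>k. \<tau> k = - hfun J C (x k) (d k) / (norm (d k))\<^sup>2"
    and alphak: "\<forall>k. \<exists>j::nat. \<alpha> k = \<delta> ^ j * \<tau> k \<and>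
        cone_le K (F (x k + \<alpha> k *\<^sub>R d k)) (F (x k) + (\<rho> * \<alpha> k * hfun J C (x k) (d k)) *\<^sub>R e) \<and>
        (\<forall>i<j. \<not> cone_le K (F (x k + (\<delta> ^ i * \<tau> k) *\<^sub>R d k))
                    (F (x k) + (\<rho> * (\<delta> ^ i * \<tau> k) * hfun J C (x k) (d k)) *\<^sub>R e))"
    and xk: "\<forall>k. x (Suc k) = x k + \<alpha> k *\<^sub>R d k"
    and infinite_seq: "\<forall>k. vfun J C (x k) \<noteq> 0"
  shows "liminf (\<lambda>k. ereal (norm (vfun J C (x k)))) = 0"
proof (rule ccontr)
  assume contra: "liminf (\<lambda>k. ereal (norm (vfun J C (x k)))) \<noteq> 0"
  obtain \<Lambda> L0 where Lam: "open \<Lambda>" "{y. cone_le K (F y) (F (x 0))} \<subseteq> \<Lambda>"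
      "\<forall>y\<in>\<Lambda>. \<forall>z\<in>\<Lambda>. norm (J y - J z) \<le> L0 * norm (y - z)"
    using A1 by blast
  define L where "L = max L0 1"
  have L1: "L \<ge> 1" unfolding L_def by simp
  have lip: "\<forall>y\<in>\<Lambda>. \<forall>z\<in>\<Lambda>. norm (J y - J z) \<le> L * norm (y - z)"
  proof (intro ballI)
    fix y z assume "y \<in> \<Lambda>" "z \<in> \<Lambda>"
    then have "norm (J y - J z) \<le> L0 * norm (y - z)" using Lam(3) by blast
    also have "\<dots> \<le> L * norm (y - z)" unfolding L_def by (intro mult_right_mono) auto
    finally show "norm (J y - J z) \<le> L * norm (y - z)" .
  qed
  have Cne: "C \<noteq> {}"
  proof
    assume "C = {}"
    then have "pos_polar K = {}" using C_gen by (simp add: cone_hull_empty)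
    moreover have "0 \<in> pos_polar K" unfolding pos_polar_def by simp
    ultimately show False by simp
  qed
  have Kc: "\<And>y. y \<in> K \<longleftrightarrow> (\<forall>c\<in>C. 0 \<le> inner c y)"
    by (rule K_char[OF K_cone K_closed C_gen])
  have le_iff: "\<And>u v. cone_le K u v \<longleftrightarrow> (\<forall>c\<in>C. inner c u \<le> inner c v)"
    unfolding cone_le_def Kc by (simp add: inner_diff_right)
  obtain c0 where c0: "c0 \<in> C" using Cne by blast
  define cm where "cm = (\<Sum>c\<in>C. norm c)"
  have ncm: "\<And>c. c \<in> C \<Longrightarrow> norm c \<le> cm"
    unfolding cm_def using C_fin by (intro member_le_sum) auto
  have cm_pos: "cm > 0"
  proof -
    have "c0 \<noteq> 0" using c0 C_0 by blast
    then have "norm c0 > 0" by simp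
    then show ?thesis using ncm[OF c0] by linarith
  qed
  have ce_pos: "\<And>c. c \<in> C \<Longrightarrow> 0 < inner c e"
  proof -
    fix c assume c: "c \<in> C"
    then have cn: "c \<noteq> 0" using C_0 by blast
    then have nc: "norm c > 0" by simp
    obtain eps where eps: "eps > 0" "ball e eps \<subseteq> K" using e_int mem_interior by blast
    define s where "s = eps / (2 * norm c)"
    have s0: "s > 0" unfolding s_def using eps nc by simp
    have "dist e (e - s *\<^sub>R c) = s * norm c" using s0 by (simp add: dist_norm)
    also have "\<dots> = eps / 2" unfolding s_def using nc by simp
    finally have "e - s *\<^sub>R c \<in> ball e eps" using eps by simp
    then have "e - s *\<^sub>R c \<in> K" using eps by blast
    then have "0 \<le> inner c (e - s *\<^sub>R c)" using Kc c by blast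
    then have "s * (norm c)\<^sup>2 \<le> inner c e"
      by (simp add: inner_diff_right power2_norm_eq_inner)
    moreover have "s * (norm c)\<^sup>2 > 0" using s0 nc by simp
    ultimately show "0 < inner c e" by linarith
  qed

  define v where "v k = vfun J C (x k)" for k
  define P where "P k = (norm (v k))\<^sup>2" for k
  define hk where "hk k = hfun J C (x k) (d k)" for k
  have hv: "\<And>k. hfun J C (x k) (v k) = - P k"
    unfolding v_def P_def by (rule hfun_vfun[OF C_fin Cne])
  have hv': "\<And>k. hfun J C (x k) (vfun J C (x k)) = - P k"
    using hv unfolding v_def .
  have Ppos: "\<And>k. P k > 0" unfolding P_def v_def using infinite_seq by simp
  define r where "r = 2 / \<mu>"
  have r01: "0 < r" "r < 1" unfolding r_def using mu by auto
  have beta: "0 \<le> \<beta> k \<and> \<beta> k * P (k - 1) \<le> r * P k \<and>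
      \<beta> k * \<bar>hfun J C (x k) (d (k - 1))\<bar> \<le> r * P k" if k1: "k \<ge> 1" for k
  proof -
    define a where "a = hfun J C (x (k - 1)) (v k)"
    define b where "b = hfun J C (x k) (d (k - 1))"
    define Q where "Q = P (k - 1)"
    have Q0: "Q > 0" unfolding Q_def using Ppos by simp
    have bk: "\<beta> k = (P k * (\<bar>a\<bar> + a)) / max (\<mu> * \<bar>b * a\<bar>) (\<mu> * Q * \<bar>a\<bar>)"
      using betak[rule_format, OF k1] unfolding a_def b_def Q_def v_def
      by (simp add: hv')
    show ?thesis
    proof (cases "a \<le> 0")
      case True
      then have "\<bar>a\<bar> + a = 0" by simp
      then have "\<beta> k = 0" using bk by simp
      moreover have "0 \<le> r * P k" using Ppos[of k] r01 by simp
      ultimately show ?thesis by simp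
    next
      case False
      then have a0: "a > 0" by simp
      define D where "D = max (\<mu> * \<bar>b * a\<bar>) (\<mu> * Q * \<bar>a\<bar>)"
      have D1: "D \<ge> \<mu> * Q * a" unfolding D_def using a0 by simp
      have D2: "D \<ge> \<mu> * \<bar>b\<bar> * a" unfolding D_def using a0 by (simp add: abs_mult)
      have Dpos: "D > 0" using D1 mu Q0 a0 by (smt (verit) mult_pos_pos)
      have bk2: "\<beta> k = 2 * P k * a / D" using bk a0 unfolding D_def by simp
      have bge: "\<beta> k \<ge> 0" using bk2 Dpos a0 Ppos[of k] by simp
      have "\<beta> k * D = 2 * P k * a" using bk2 Dpos by simp
      have i1: "\<beta> k * (\<mu> * Q * a) \<le> 2 * P k * a"
        using mult_left_mono[OF D1 bge] \<open>\<beta> k * D = 2 * P k * a\<close> by simp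
      have i2: "\<beta> k * (\<mu> * \<bar>b\<bar> * a) \<le> 2 * P k * a"
        using mult_left_mono[OF D2 bge] \<open>\<beta> k * D = 2 * P k * a\<close> by simp
      have "(\<beta> k * Q) * (\<mu> * a) \<le> (r * P k) * (\<mu> * a)"
        using i1 mu unfolding r_def by (simp add: algebra_simps)
      then have j1: "\<beta> k * Q \<le> r * P k"
        using mu a0 by (simp add: mult_le_cancel_right)
      have "(\<beta> k * \<bar>b\<bar>) * (\<mu> * a) \<le> (r * P k) * (\<mu> * a)"
        using i2 mu unfolding r_def by (simp add: algebra_simps)
      then have j2: "\<beta> k * \<bar>b\<bar> \<le> r * P k"
        using mu a0 by (simp add: mult_le_cancel_right)
      show ?thesis using bge j1 j2 unfolding Q_def b_def by simp
    qed
  qed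
  have hk_bound: "\<And>k. hk k \<le> - (1 - r) * P k"
  proof -
    fix k
    show "hk k \<le> - (1 - r) * P k"
    proof (cases "k = 0")
      case True
      then have "hk k = - P k" unfolding hk_def using d0 hv[of 0] v_def by simp
      then show ?thesis using r01 Ppos[of k] by (simp add: algebra_simps)
    next
      case False
      then have k1: "k \<ge> 1" by simp
      have "hk k = hfun J C (x k) (v k + \<beta> k *\<^sub>R d (k - 1))"
        unfolding hk_def v_def using dk k1 by simp
      also have "\<dots> \<le> hfun J C (x k) (v k) + hfun J C (x k) (\<beta> k *\<^sub>R d (k - 1))"
        by (rule hfun_add[OF C_fin Cne])
      also have "hfun J C (x k) (\<beta> k *\<^sub>R d (k - 1)) = \<beta> k * hfun J C (x k) (d (k - 1))"
        using beta[OF k1] by (simp add: hfun_scale[OF C_fin Cne])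
      also have "\<beta> k * hfun J C (x k) (d (k - 1)) \<le> \<beta> k * \<bar>hfun J C (x k) (d (k - 1))\<bar>"
        using beta[OF k1] by (intro mult_left_mono) auto
      finally show ?thesis using beta[OF k1] hv[of k] by (simp add: algebra_simps)
    qed
  qed
  have hk_neg: "\<And>k. hk k < 0"
  proof -
    fix k
    have "(1 - r) * P k > 0" using Ppos[of k] r01 by simp
    then show "hk k < 0" using hk_bound[of k] by linarith
  qed
  have d_ne: "\<And>k. d k \<noteq> 0"
  proof
    fix k assume "d k = 0"
    then have "hk k = 0" unfolding hk_def using hfun_zero[OF C_fin Cne] by simp
    then show False using hk_neg[of k] by simp
  qed
  have nd_pos: "\<And>k. (norm (d k))\<^sup>2 > 0" using d_ne by simp
  have tau_eq: "\<And>k. \<tau> k = - hk k / (norm (d k))\<^sup>2" using tauk unfolding hk_def by simp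
  have tau_pos: "\<And>k. \<tau> k > 0"
  proof -
    fix k
    have "- hk k > 0" using hk_neg[of k] by simp
    then show "\<tau> k > 0" unfolding tau_eq using nd_pos[of k] by (rule divide_pos_pos)
  qed
  obtain jj where jj: "\<And>k. \<alpha> k = \<delta> ^ jj k * \<tau> k \<and>
        cone_le K (F (x k + \<alpha> k *\<^sub>R d k)) (F (x k) + (\<rho> * \<alpha> k * hk k) *\<^sub>R e) \<and>
        (\<forall>i<jj k. \<not> cone_le K (F (x k + (\<delta> ^ i * \<tau> k) *\<^sub>R d k))
                    (F (x k) + (\<rho> * (\<delta> ^ i * \<tau> k) * hk k) *\<^sub>R e))"
  proof -
    have "\<forall>k. \<exists>j. \<alpha> k = \<delta> ^ j * \<tau> k \<and>
        cone_le K (F (x k + \<alpha> k *\<^sub>R d k)) (F (x k) + (\<rho> * \<alpha> k * hk k) *\<^sub>R e) \<and>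
        (\<forall>i<j. \<not> cone_le K (F (x k + (\<delta> ^ i * \<tau> k) *\<^sub>R d k))
                    (F (x k) + (\<rho> * (\<delta> ^ i * \<tau> k) * hk k) *\<^sub>R e))"
      using alphak unfolding hk_def .
    then have "\<exists>jj. \<forall>k. \<alpha> k = \<delta> ^ jj k * \<tau> k \<and>
        cone_le K (F (x k + \<alpha> k *\<^sub>R d k)) (F (x k) + (\<rho> * \<alpha> k * hk k) *\<^sub>R e) \<and>
        (\<forall>i<jj k. \<not> cone_le K (F (x k + (\<delta> ^ i * \<tau> k) *\<^sub>R d k))
                    (F (x k) + (\<rho> * (\<delta> ^ i * \<tau> k) * hk k) *\<^sub>R e))"
      by (rule choice)
    then obtain jj where "\<forall>k. \<alpha> k = \<delta> ^ jj k * \<tau> k \<and>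
        cone_le K (F (x k + \<alpha> k *\<^sub>R d k)) (F (x k) + (\<rho> * \<alpha> k * hk k) *\<^sub>R e) \<and>
        (\<forall>i<jj k. \<not> cone_le K (F (x k + (\<delta> ^ i * \<tau> k) *\<^sub>R d k))
                    (F (x k) + (\<rho> * (\<delta> ^ i * \<tau> k) * hk k) *\<^sub>R e))" ..
    then show ?thesis using that by blast
  qed
  have alpha_pos: "\<And>k. \<alpha> k > 0"
  proof -
    fix k
    have "\<alpha> k = \<delta> ^ jj k * \<tau> k" using jj[of k] by blast
    then show "\<alpha> k > 0" using tau_pos[of k] delta by simp
  qed
  have step: "\<And>k c. c \<in> C \<Longrightarrow>
      inner c (F (x (Suc k))) \<le> inner c (F (x k)) + \<rho> * \<alpha> k * hk k * inner c e"
  proof -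
    fix k c assume c: "c \<in> C"
    have A: "cone_le K (F (x k + \<alpha> k *\<^sub>R d k)) (F (x k) + (\<rho> * \<alpha> k * hk k) *\<^sub>R e)"
      using jj[of k] by blast
    have "cone_le K (F (x (Suc k))) (F (x k) + (\<rho> * \<alpha> k * hk k) *\<^sub>R e)"
      by (subst xk[rule_format]) (rule A)
    then have "inner c (F (x (Suc k))) \<le> inner c (F (x k) + (\<rho> * \<alpha> k * hk k) *\<^sub>R e)"
      using le_iff c by blast
    then show "inner c (F (x (Suc k))) \<le> inner c (F (x k)) + \<rho> * \<alpha> k * hk k * inner c e"
      by (simp add: inner_add_right)
  qed
  have decr_term: "\<And>k c. c \<in> C \<Longrightarrow> \<rho> * \<alpha> k * hk k * inner c e \<le> 0"
  proof -
    fix k c assume c: "c \<in> C"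
    have "\<rho> * \<alpha> k > 0" using rho alpha_pos[of k] by simp
    moreover have "hk k * inner c e < 0" using hk_neg[of k] ce_pos[OF c] mult_neg_pos by blast
    ultimately have "(\<rho> * \<alpha> k) * (hk k * inner c e) < 0" using mult_pos_neg by blast
    then show "\<rho> * \<alpha> k * hk k * inner c e \<le> 0" by (simp add: mult.assoc)
  qed
  have mono: "\<And>k c. c \<in> C \<Longrightarrow> inner c (F (x (Suc k))) \<le> inner c (F (x k))"
    proof -
    fix k c assume c: "c \<in> C"
    show "inner c (F (x (Suc k))) \<le> inner c (F (x k))"
      using step[OF c, of k] decr_term[OF c, of k] by linarith
  qed
  have inL: "\<And>k c. c \<in> C \<Longrightarrow> inner c (F (x k)) \<le> inner c (F (x 0))"
  proof -
    fix k c assume c: "c \<in> C"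
    show "inner c (F (x k)) \<le> inner c (F (x 0))"
    proof (induction k)
      case 0 then show ?case by simp
    next
      case (Suc k) then show ?case using mono[OF c, of k] by linarith
    qed
  qed
  have inLam: "\<And>k. x k \<in> \<Lambda>"
  proof -
    fix k
    have "x k \<in> {y. cone_le K (F y) (F (x 0))}" using inL by (simp add: le_iff)
    then show "x k \<in> \<Lambda>" using Lam(2) by blast
  qed
  obtain D0 where D0: "\<And>k c. c \<in> C \<Longrightarrow> inner c D0 \<le> inner c (F (x k))"
  proof -
    have "(\<forall>k. F (x k) \<in> F ` {y. cone_le K (F y) (F (x 0))}) \<and>
              (\<forall>k. cone_le K (F (x (Suc k))) (F (x k)))"
      using inL mono by (auto simp: le_iff)
    then have "\<exists>D0. \<forall>k. cone_le K D0 (F (x k))" using A2[rule_format, of "\<lambda>k. F (x k)"] by blast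
    then obtain D0 where "\<forall>k. cone_le K D0 (F (x k))" by blast
    then have "\<forall>k. \<forall>c\<in>C. inner c D0 \<le> inner c (F (x k))" by (simp add: le_iff)
    then show ?thesis using that by blast
  qed
  define Bs where "Bs = (inner c0 (F (x 0)) - inner c0 D0) / (\<rho> * inner c0 e)"
  have rce: "\<rho> * inner c0 e > 0" using rho ce_pos[OF c0] by simp
  have sumb: "\<And>n. \<rho> * inner c0 e * (\<Sum>k<n. \<alpha> k * (- hk k)) \<le> inner c0 (F (x 0)) - inner c0 (F (x n))"
  proof -
    fix n show "\<rho> * inner c0 e * (\<Sum>k<n. \<alpha> k * (- hk k)) \<le> inner c0 (F (x 0)) - inner c0 (F (x n))"
    proof (induction n)
      case 0 then show ?case by simp
    next
      case (Suc n)
      have "\<rho> * inner c0 e * (\<Sum>k<Suc n. \<alpha> k * (- hk k))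
          = \<rho> * inner c0 e * (\<Sum>k<n. \<alpha> k * (- hk k)) - \<rho> * \<alpha> n * hk n * inner c0 e"
        by (simp add: algebra_simps)
      also have "\<dots> \<le> inner c0 (F (x 0)) - inner c0 (F (x (Suc n)))"
        using Suc step[OF c0, of n] by linarith
      finally show ?case .
    qed
  qed
  have sumB: "\<And>n. (\<Sum>k<n. \<alpha> k * (- hk k)) \<le> Bs"
  proof -
    fix n
    have "\<rho> * inner c0 e * (\<Sum>k<n. \<alpha> k * (- hk k)) \<le> inner c0 (F (x 0)) - inner c0 D0"
      using sumb[of n] D0[OF c0, of n] by linarith
    then show "(\<Sum>k<n. \<alpha> k * (- hk k)) \<le> Bs" unfolding Bs_def using rce
      by (simp add: pos_le_divide_eq mult.commute)
  qed
  define g where "g k = (hk k)\<^sup>2 / (norm (d k))\<^sup>2" for k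
  define \<kappa> where "\<kappa> = min 1 (\<delta> * (1 - \<rho>) / (L * cm))"
  have Lcm: "L * cm > 0" using L1 cm_pos by simp
  have kap_pos: "\<kappa> > 0" unfolding \<kappa>_def using delta rho Lcm by simp
  have g_nn: "\<And>k. g k \<ge> 0" unfolding g_def by simp
  have L0: "L \<ge> 0" using L1 by simp
  have key: "\<And>k. \<kappa> * g k \<le> \<alpha> k * (- hk k)"
  proof -
    fix k
    define nd where "nd = (norm (d k))\<^sup>2"
    have nd0: "nd > 0" unfolding nd_def using nd_pos by simp
    have hh0: "hk k < 0" by (rule hk_neg)
    have aj: "\<alpha> k = \<delta> ^ jj k * \<tau> k" using jj[of k] by blast
    show "\<kappa> * g k \<le> \<alpha> k * (- hk k)"
    proof (cases "jj k = 0")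
      case True
      then have "\<alpha> k = \<tau> k" using aj by simp
      then have "\<alpha> k * (- hk k) = g k" unfolding g_def tau_eq by (simp add: power2_eq_square)
      moreover have "\<kappa> * g k \<le> 1 * g k" unfolding \<kappa>_def using g_nn[of k]
        by (intro mult_right_mono) auto
      ultimately show ?thesis by simp
    next
      case False
      define t where "t = \<delta> ^ (jj k - 1) * \<tau> k"
      have t0: "t > 0" unfolding t_def using delta tau_pos[of k] by simp
      have jsuc: "jj k = Suc (jj k - 1)" using False by simp
      have at: "\<alpha> k = \<delta> * t" unfolding t_def aj by (subst jsuc) simp
      have "jj k - 1 < jj k" using False by simp
      then have fail: "\<not> cone_le K (F (x k + t *\<^sub>R d k)) (F (x k) + (\<rho> * t * hk k) *\<^sub>R e)"
        using jj[of k] unfolding t_def by blast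
      then obtain c where c: "c \<in> C"
          "inner c (F (x k + t *\<^sub>R d k)) > inner c (F (x k)) + \<rho> * t * hk k * inner c e"
        by (auto simp: le_iff inner_add_right)
      have rth: "\<rho> * t * hk k \<le> 0" using rho t0 hh0 by (simp add: mult_pos_neg mult_nonneg_nonpos)
      have "\<rho> * t * hk k * 1 \<le> \<rho> * t * hk k * inner c e"
        using e_C c(1) rth by (intro mult_left_mono_neg) auto
      then have fail2: "inner c (F (x k + t *\<^sub>R d k)) - inner c (F (x k)) > \<rho> * t * hk k"
        using c(2) by linarith
      have claim: "(1 - \<rho>) * (- hk k) \<le> L * cm * t * nd"
      proof (cases "\<forall>r. 0 \<le> r \<and> r < t \<longrightarrow> x k + r *\<^sub>R d k \<in> \<Lambda>")
        case True
        have "inner c (F (x k + t *\<^sub>R d k)) - inner c (F (x k))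
            \<le> t * inner (blinfun_apply (J (x k)) (d k)) c + norm c * L * t\<^sup>2 * (norm (d k))\<^sup>2"
          by (rule lemA[OF F_deriv lip L0 t0 True])
        also have "\<dots> \<le> t * hk k + cm * L * t\<^sup>2 * nd"
          unfolding nd_def hk_def
          using hfun_ge[OF C_fin Cne c(1), of J "x k" "d k"] ncm[OF c(1)] t0 L0
          by (intro add_mono mult_left_mono mult_right_mono) auto
        finally have "\<rho> * t * hk k < t * hk k + cm * L * t\<^sup>2 * nd" using fail2 by linarith
        then have "t * ((1 - \<rho>) * (- hk k)) < t * (L * cm * t * nd)"
          by (simp add: algebra_simps power2_eq_square)
        then have "(1 - \<rho>) * (- hk k) < L * cm * t * nd"
          using mult_less_cancel_left_pos[OF t0] by blast
        then show ?thesis by simp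
      next
        case False
        then obtain r0 where r0: "0 \<le> r0" "r0 < t" "x k + r0 *\<^sub>R d k \<notin> \<Lambda>" by blast
        define U where "U = {0..t} \<inter> (\<lambda>r. x k + r *\<^sub>R d k) -` (- \<Lambda>)"
        have "r0 \<in> U" unfolding U_def using r0 by auto
        then have Une: "U \<noteq> {}" by blast
        have bdd: "bdd_below U" unfolding U_def by (rule bdd_belowI[of _ 0]) auto
        have clU: "closed U" unfolding U_def
          by (intro closed_Int closed_atLeastAtMost continuous_closed_vimage)
             (use Lam(1) in \<open>auto intro!: continuous_intros\<close>)
        define s where "s = Inf U"
        have sU: "s \<in> U" unfolding s_def by (rule closed_contains_Inf[OF Une bdd clU])
        then have s_le: "0 \<le> s" "s \<le> t" and sL: "x k + s *\<^sub>R d k \<notin> \<Lambda>" unfolding U_def by auto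
        have s_pos: "s > 0"
        proof (rule ccontr)
          assume "\<not> s > 0"
          then have "s = 0" using s_le by simp
          then show False using sL inLam[of k] by simp
        qed
        have seg: "\<forall>r. 0 \<le> r \<and> r < s \<longrightarrow> x k + r *\<^sub>R d k \<in> \<Lambda>"
        proof (intro allI impI)
          fix r assume r: "0 \<le> r \<and> r < s"
          show "x k + r *\<^sub>R d k \<in> \<Lambda>"
          proof (rule ccontr)
            assume "x k + r *\<^sub>R d k \<notin> \<Lambda>"
            then have "r \<in> U" unfolding U_def using r s_le by auto
            then have "s \<le> r" unfolding s_def by (rule cInf_lower[OF _ bdd])
            then show False using r by simp
          qed
        qed
        have "\<not> (\<forall>c\<in>C. inner c (F (x k + s *\<^sub>R d k)) \<le> inner c (F (x 0)))"
        proof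
          assume "\<forall>c\<in>C. inner c (F (x k + s *\<^sub>R d k)) \<le> inner c (F (x 0))"
          then have "x k + s *\<^sub>R d k \<in> {y. cone_le K (F y) (F (x 0))}" by (simp add: le_iff)
          then show False using Lam(2) sL by blast
        qed
        then obtain c' where c': "c' \<in> C" "inner c' (F (x k + s *\<^sub>R d k)) > inner c' (F (x 0))"
          by auto
        have pos: "inner c' (F (x k + s *\<^sub>R d k)) - inner c' (F (x k)) > 0"
          using c'(2) inL[OF c'(1), of k] by linarith
        have "inner c' (F (x k + s *\<^sub>R d k)) - inner c' (F (x k))
            \<le> s * inner (blinfun_apply (J (x k)) (d k)) c' + norm c' * L * s\<^sup>2 * (norm (d k))\<^sup>2"
          by (rule lemA[OF F_deriv lip L0 s_pos seg])
        also have "\<dots> \<le> s * hk k + cm * L * s\<^sup>2 * nd"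
          unfolding nd_def hk_def
          using hfun_ge[OF C_fin Cne c'(1), of J "x k" "d k"] ncm[OF c'(1)] s_pos L0
          by (intro add_mono mult_left_mono mult_right_mono) auto
        finally have "0 < s * hk k + cm * L * s\<^sup>2 * nd" using pos by linarith
        then have "s * (- hk k) < s * (L * cm * s * nd)"
          by (simp add: algebra_simps power2_eq_square)
        then have "- hk k < L * cm * s * nd" using mult_less_cancel_left_pos[OF s_pos] by blast
        also have "\<dots> \<le> L * cm * t * nd"
          using s_le Lcm nd0 by (intro mult_right_mono mult_left_mono) auto
        finally have "- hk k < L * cm * t * nd" .
        moreover have "(1 - \<rho>) * (- hk k) \<le> 1 * (- hk k)"
          using rho hh0 by (intro mult_right_mono) auto
        ultimately show ?thesis by linarith
      qed
      have e1: "\<delta> * (1 - \<rho>) / (L * cm) * g k = \<delta> * ((1 - \<rho>) * (- hk k)) * (- hk k) / (L * cm * nd)"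
        unfolding g_def nd_def by (simp add: power2_eq_square)
      have e2: "\<delta> * ((1 - \<rho>) * (- hk k)) * (- hk k) / (L * cm * nd)
          \<le> \<delta> * (L * cm * t * nd) * (- hk k) / (L * cm * nd)"
        using claim delta hh0 Lcm nd0
        by (intro divide_right_mono mult_right_mono mult_left_mono) auto
      have e3: "\<delta> * (L * cm * t * nd) * (- hk k) / (L * cm * nd) = \<alpha> k * (- hk k)"
      proof -
        have "L \<noteq> 0" "cm \<noteq> 0" "nd \<noteq> 0" using L1 cm_pos nd0 by auto
        then show ?thesis unfolding at by (simp add: field_simps)
      qed
      have "\<kappa> * g k \<le> \<delta> * (1 - \<rho>) / (L * cm) * g k"
        unfolding \<kappa>_def using g_nn[of k] by (intro mult_right_mono) auto
      then show ?thesis using e1 e2 e3 by linarith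
    qed
  qed
  have summ: "summable (\<lambda>k. \<kappa> * g k)"
  proof (rule bounded_imp_summable)
    show "\<And>n. 0 \<le> \<kappa> * g n" using kap_pos g_nn by simp
    show "\<And>n. (\<Sum>k\<le>n. \<kappa> * g k) \<le> Bs"
    proof -
      fix n
      have "(\<Sum>k\<le>n. \<kappa> * g k) \<le> (\<Sum>k\<le>n. \<alpha> k * (- hk k))"
        by (rule sum_mono) (rule key)
      also have "\<dots> = (\<Sum>k<Suc n. \<alpha> k * (- hk k))" by (simp add: lessThan_Suc_atMost)
      also have "\<dots> \<le> Bs" by (rule sumB)
      finally show "(\<Sum>k\<le>n. \<kappa> * g k) \<le> Bs" .
    qed
  qed
  then have "(\<lambda>k. \<kappa> * g k) \<longlonglongrightarrow> 0" by (rule summable_LIMSEQ_zero)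
  then have "(\<lambda>k. (1 / \<kappa>) * (\<kappa> * g k)) \<longlonglongrightarrow> (1 / \<kappa>) * 0" by (rule tendsto_mult_left)
  then have g0: "g \<longlonglongrightarrow> 0" using kap_pos by simp
  have lim_nn: "0 \<le> liminf (\<lambda>k. ereal (norm (vfun J C (x k))))"
    by (rule Liminf_bounded) simp
  then have lim_pos: "0 < liminf (\<lambda>k. ereal (norm (vfun J C (x k))))"
    using contra by simp
  then obtain z where z: "0 < z" "z < liminf (\<lambda>k. ereal (norm (vfun J C (x k))))"
    using dense by blast
  then have ev: "eventually (\<lambda>k. z < ereal (norm (vfun J C (x k)))) sequentially"
    using le_Liminf_iff[THEN iffD1, OF order_refl] by blast
  obtain N0 where N0: "\<And>k. k \<ge> N0 \<Longrightarrow> z < ereal (norm (v k))"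
    using ev unfolding eventually_sequentially v_def by blast
  have zfin: "z \<noteq> \<infinity>" using N0[of N0] by auto
  define \<gamma> where "\<gamma> = real_of_ereal z"
  have zg: "z = ereal \<gamma>" unfolding \<gamma>_def using zfin z(1) by (cases z) auto
  have gam_pos: "\<gamma> > 0" using z(1) zg by simp
  have N: "\<And>k. k \<ge> N0 \<Longrightarrow> \<gamma> < norm (v k)" using N0 zg by simp
  define w where "w k = norm (d k) / P k" for k
  have w_pos: "\<And>k. w k > 0" unfolding w_def using d_ne Ppos by simp
  have wrec: "\<And>k. k \<ge> 1 \<Longrightarrow> w k \<le> 1 / norm (v k) + r * w (k - 1)"
  proof -
    fix k :: nat assume k1: "k \<ge> 1"
    have bk: "0 \<le> \<beta> k" "\<beta> k * P (k - 1) \<le> r * P k" using beta[OF k1] by auto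
    have "norm (d k) = norm (v k + \<beta> k *\<^sub>R d (k - 1))" using dk k1 unfolding v_def by simp
    also have "\<dots> \<le> norm (v k) + \<beta> k * norm (d (k - 1))"
      using bk(1) by (metis abs_of_nonneg norm_scaleR norm_triangle_ineq)
    also have "\<beta> k * norm (d (k - 1)) \<le> r * P k * w (k - 1)"
    proof -
      have "\<beta> k * norm (d (k - 1)) = (\<beta> k * P (k - 1)) * w (k - 1)"
        unfolding w_def using Ppos[of "k - 1"] by simp
      also have "\<dots> \<le> (r * P k) * w (k - 1)"
        using bk(2) w_pos[of "k - 1"] by (intro mult_right_mono) auto
      finally show ?thesis by simp
    qed
    finally have "norm (d k) \<le> norm (v k) + r * P k * w (k - 1)" by simp
    then have "norm (d k) / P k \<le> (norm (v k) + r * P k * w (k - 1)) / P k"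
      using Ppos[of k] by (intro divide_right_mono) auto
    also have "\<dots> = 1 / norm (v k) + r * w (k - 1)"
    proof -
      have "norm (v k) > 0" using Ppos[of k] unfolding P_def by simp
      then show ?thesis unfolding P_def by (simp add: field_simps power2_eq_square)
    qed
    finally show "w k \<le> 1 / norm (v k) + r * w (k - 1)" unfolding w_def .
  qed
  define B where "B = max (w N0) (1 / (\<gamma> * (1 - r)))"
  have B1: "1 / (\<gamma> * (1 - r)) \<le> B" unfolding B_def by simp
  have Bpos: "B > 0"
  proof -
    have "1 / (\<gamma> * (1 - r)) > 0" using gam_pos r01 by simp
    then show ?thesis using B1 by linarith
  qed
  have wB: "\<And>k. k \<ge> N0 \<Longrightarrow> w k \<le> B"
  proof -
    fix k assume "k \<ge> N0"
    then show "w k \<le> B"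
    proof (induction k rule: dec_induct)
      case base then show ?case unfolding B_def by simp
    next
      case (step k)
      have "w (Suc k) \<le> 1 / norm (v (Suc k)) + r * w k" using wrec[of "Suc k"] by simp
      also have "1 / norm (v (Suc k)) \<le> 1 / \<gamma>"
        using N[of "Suc k"] step(1) gam_pos by (intro divide_left_mono) (auto intro!: mult_pos_pos)
      also have "r * w k \<le> r * B" using step(3) r01 by (intro mult_left_mono) auto
      also have "1 / \<gamma> \<le> (1 - r) * B"
      proof -
        have "1 / \<gamma> = (1 - r) * (1 / (\<gamma> * (1 - r)))" using r01 gam_pos by simp
        also have "\<dots> \<le> (1 - r) * B" using B1 r01 by (intro mult_left_mono) auto
        finally show ?thesis .
      qed
      finally show ?case by (simp add: algebra_simps)
    qed
  qed
  define \<eta> where "\<eta> = (1 - r)\<^sup>2 / B\<^sup>2"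
  have eta_pos: "\<eta> > 0" unfolding \<eta>_def using r01 Bpos by simp
  have glow: "\<And>k. k \<ge> N0 \<Longrightarrow> \<eta> \<le> g k"
  proof -
    fix k assume kN: "k \<ge> N0"
    have a: "0 \<le> (1 - r) * P k" using r01 Ppos[of k] by simp
    have "(1 - r) * P k \<le> - hk k" using hk_bound[of k] by (simp add: algebra_simps)
    then have "((1 - r) * P k)\<^sup>2 \<le> (- hk k)\<^sup>2" using a by (rule power_mono)
    then have hsq: "((1 - r) * P k)\<^sup>2 \<le> (hk k)\<^sup>2" by simp
    have "g k \<ge> ((1 - r) * P k)\<^sup>2 / (norm (d k))\<^sup>2"
      unfolding g_def using hsq nd_pos[of k] by (intro divide_right_mono) auto
    also have "((1 - r) * P k)\<^sup>2 / (norm (d k))\<^sup>2 = (1 - r)\<^sup>2 / (w k)\<^sup>2"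
      unfolding w_def using Ppos[of k] d_ne[of k] by (simp add: field_simps power2_eq_square)
    also have "(1 - r)\<^sup>2 / (w k)\<^sup>2 \<ge> \<eta>"
    proof -
      have "(w k)\<^sup>2 \<le> B\<^sup>2" using wB[OF kN] w_pos[of k] by (intro power_mono) auto
      moreover have "0 < B\<^sup>2 * (w k)\<^sup>2" using Bpos w_pos[of k] by simp
      ultimately show ?thesis unfolding \<eta>_def using w_pos[of k] r01
        by (intro divide_left_mono) auto
    qed
    finally show "\<eta> \<le> g k" .
  qed
  obtain N2 where N2: "\<And>k. k \<ge> N2 \<Longrightarrow> g k < \<eta>"
    using order_tendstoD(2)[OF g0 eta_pos] unfolding eventually_sequentially by blast
  show False using N2[of "max N0 N2"] glow[of "max N0 N2"] by simp
qed

end
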